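(* Let $p$ be an integer with $1\le p\le13$. For $\eta\in\mathbf P^p([-1,1])$ with $\eta(-1)=0$, write $\eta=\sum_{m=1}^p\eta_m(L_m+L_{m-1})$ and define $$\Delta(\eta):=(2\eta(1)-3\eta_p)^2+p^2\Big(-4\|\eta\|^2_{L^2(-1,1)}+\frac{9\eta_p^2}{2p+1}\Big).$$ Then $\Delta(\eta)<0$ for every such $\eta$ that is not the null function.
   Context: $L_m$ are the Legendre polynomials: $L_0=1$, $L_1=x$, $(m+1)L_{m+1}=(2m+1)xL_m-mL_{m-1}$; $L_m(1)=1$, $L_m(-1)=(-1)^m$, so the polynomials $L_m+L_{m-1}$, $1\le m\le p$, form a basis of $\{\eta\in\mathbf P^p([-1,1]):\eta(-1)=0\}$ and the coefficients $\eta_m$ are uniquely determined. $\mathbf P^p([-1,1])$ is the space of real polynomials of degree at most $p$. *)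

theory Defs
  imports "HOL-Analysis.Analysis" "HOL-Computational_Algebra.Polynomial"
begin

fun legendre :: "nat \<Rightarrow> real poly" where
  "legendre 0 = 1"
| "legendre (Suc 0) = [:0, 1:]"
| "legendre (Suc (Suc m)) =
     smult (1 / real (m + 2))
       (smult (real (2 * m + 3)) (pCons 0 (legendre (Suc m))) - smult (real (m + 1)) (legendre m))"

end

theory Submission
  imports Defs
begin

definition IP :: "real poly \<Rightarrow> real" where "IP q = integral {-1..1} (poly q)"

lemma poly_integrable: "poly q integrable_on {-1..1::real}"
  by (rule integrable_continuous_interval) (rule continuous_on_poly[OF continuous_on_id, unfolded id_def])

lemma IP_add: "IP (p + q) = IP p + IP q"
proof -
  have "poly (p + q) = (\<lambda>x. poly p x + poly q x)" by (rule ext) simp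
  then show ?thesis unfolding IP_def using integral_add[OF poly_integrable poly_integrable] by simp
qed

lemma IP_smult: "IP (smult a q) = a * IP q"
proof -
  have "poly (smult a q) = (\<lambda>x. a * poly q x)" by (rule ext) simp
  then show ?thesis unfolding IP_def by (simp add: integral_mult_right)
qed

lemma IP_minus: "IP (- q) = - IP q"
  using IP_smult[of "-1" q] by simp

lemma IP_diff: "IP (p - q) = IP p - IP q"
  using IP_add[of p "-q"] IP_minus[of q] by simp

lemma IP_0: "IP 0 = 0"
  using IP_smult[of 0 0] by simp

lemma IP_sum: "finite S \<Longrightarrow> IP (\<Sum>s\<in>S. f s) = (\<Sum>s\<in>S. IP (f s))"
  by (induction S rule: finite_induct) (simp_all add: IP_0 IP_add)

lemma IP_pderiv: "IP (pderiv q) = poly q 1 - poly q (-1)"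
proof -
  have "(poly (pderiv q) has_integral poly q 1 - poly q (-1)) {-1..1}"
    apply (rule fundamental_theorem_of_calculus)
     apply simp
    apply (rule has_vector_derivative_at_within)
    using poly_DERIV[of q] by (simp add: has_real_derivative_iff_has_vector_derivative)
  then show ?thesis unfolding IP_def by (rule integral_unique)
qed

abbreviation LP where "LP n x \<equiv> poly (legendre n) x"
abbreviation LD where "LD n x \<equiv> poly (pderiv (legendre n)) x"

lemma P_rec: "(real m + 2) * LP (Suc (Suc m)) x = (2 * real m + 3) * x * LP (Suc m) x - (real m + 1) * LP m x"
  by (simp add: field_simps)

lemma D_rec: "(real m + 2) * LD (Suc (Suc m)) x = (2 * real m + 3) * (LP (Suc m) x + x * LD (Suc m) x) - (real m + 1) * LD m x"
  by (simp add: field_simps pderiv_smult pderiv_diff pderiv_pCons)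

lemma P_one: "LP n 1 = 1"
proof (induction n rule: legendre.induct)
  case (3 m)
  have "(real m + 2) * LP (Suc (Suc m)) 1 = (real m + 2) * 1" using P_rec[of m 1] 3
    by (simp del: legendre.simps)
  then show ?case by (simp del: legendre.simps)
qed simp_all

lemma H: "x * LD (Suc k) x - LD k x = (real k + 1) * LP (Suc k) x \<and>
          (1 - x^2) * LD (Suc k) x = (real k + 1) * (LP k x - x * LP (Suc k) x)"
proof (induction k)
  case 0
  then show ?case by (simp add: power2_eq_square pderiv_pCons)
next
  case (Suc k)
  define a where "a = LP k x"
  define b where "b = LP (Suc k) x"
  define c where "c = LP (Suc (Suc k)) x"
  define d0 where "d0 = LD k x"
  define d1 where "d1 = LD (Suc k) x"
  define d2 where "d2 = LD (Suc (Suc k)) x"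
  have h1: "x * d1 - d0 = (real k + 1) * b" and h2: "(1 - x^2) * d1 = (real k + 1) * (a - x * b)"
    using Suc unfolding a_def b_def d0_def d1_def by auto
  have r1: "(real k + 2) * c = (2 * real k + 3) * x * b - (real k + 1) * a"
    unfolding a_def b_def c_def by (rule P_rec)
  have r2: "(real k + 2) * d2 = (2 * real k + 3) * (b + x * d1) - (real k + 1) * d0"
    unfolding b_def d2_def d1_def d0_def by (rule D_rec)
  have K: "real k + 2 \<noteq> 0" by simp
  have "(real k + 2) * d2 = (real k + 2) * ((real k + 2) * b + x * d1)"
    using r2 h1 by algebra
  then have c2: "d2 = (real k + 2) * b + x * d1" using K by simp
  have g1: "x * d2 - d1 = (real k + 2) * c"
  proof -
    have "(real k + 2) * (x * d2 - d1) = (real k + 2) * ((real k + 2) * c)"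
      using c2 h2 r1 by algebra
    then show ?thesis using K by simp
  qed
  have g2: "(1 - x^2) * d2 = (real (Suc k) + 1) * (b - x * c)"
  proof -
    have "(real k + 2) * ((1 - x^2) * d2) = (real k + 2) * ((real k + 2) * (b - x * c))"
      using c2 h2 r1 by algebra
    then show ?thesis using K by simp
  qed
  show ?case using g1 g2 unfolding a_def b_def c_def d0_def d1_def d2_def
    by (simp del: legendre.simps add: add_ac)
qed

declare legendre.simps[simp del]

lemma leg0: "legendre 0 = 1" by (simp add: legendre.simps)
lemma leg1: "legendre (Suc 0) = [:0, 1:]" by (simp add: legendre.simps)

definition X :: "real poly" where "X = [:0, 1:]"
definition W :: "real poly" where "W = [:1, 0, -1:]"

lemma poly_X[simp]: "poly X x = x" by (simp add: X_def)
lemma poly_W[simp]: "poly W x = 1 - x^2" by (simp add: W_def power2_eq_square)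
lemma pderiv_X[simp]: "pderiv X = 1" by (simp add: X_def pderiv_pCons)

lemma d_poly: "W * pderiv (legendre (Suc k)) = smult (real k + 1) (legendre k - X * legendre (Suc k))"
proof -
  have hx: "poly (W * pderiv (legendre (Suc k))) x = poly (smult (real k + 1) (legendre k - X * legendre (Suc k))) x" for x
    using conjunct2[OF H[of x k]] by (simp add: algebra_simps)
  show ?thesis
    apply (rule poly_eq_poly_eq_iff[THEN iffD1])
    apply (rule ext)
    apply (rule hx)
    done
qed

lemma ode: "pderiv (W * pderiv (legendre n)) = smult (- (real n * (real n + 1))) (legendre n)"
proof (cases n)
  case 0
  then show ?thesis by (simp add: leg0)
next
  case (Suc k)
  have e: "pderiv (W * pderiv (legendre (Suc k))) = pderiv (smult (real k + 1) (legendre k - X * legendre (Suc k)))"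
    by (simp only: d_poly)
  have hx: "poly (pderiv (W * pderiv (legendre (Suc k)))) x = poly (smult (- (real (Suc k) * (real (Suc k) + 1))) (legendre (Suc k))) x" for x
  proof -
    have "poly (pderiv (W * pderiv (legendre (Suc k)))) x = (real k + 1) * (LD k x - (LP (Suc k) x + x * LD (Suc k) x))"
      unfolding e by (simp add: pderiv_smult pderiv_diff pderiv_mult)
    also have "\<dots> = - (real (Suc k) * (real (Suc k) + 1)) * LP (Suc k) x"
      using conjunct1[OF H[of x k]] by (simp add: algebra_simps)
    finally show ?thesis by simp
  qed
  show ?thesis unfolding Suc
    apply (rule poly_eq_poly_eq_iff[THEN iffD1])
    apply (rule ext)
    apply (rule hx)
    done
qed

lemma key: "real n * (real n + 1) * IP (legendre m * legendre n) = IP (pderiv (legendre m) * (W * pderiv (legendre n)))"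
proof -
  define T where "T = legendre m * (W * pderiv (legendre n))"
  have "IP (pderiv T) = 0" unfolding IP_pderiv T_def by simp
  moreover have "pderiv T = pderiv (legendre m) * (W * pderiv (legendre n)) + smult (- (real n * (real n + 1))) (legendre m * legendre n)"
    unfolding T_def pderiv_mult[of "legendre m"] ode by (simp add: ac_simps)
  ultimately show ?thesis by (simp add: IP_add IP_diff IP_smult)
qed

lemma ortho_neq: assumes "m \<noteq> n" shows "IP (legendre m * legendre n) = 0"
proof -
  have a: "real n * (real n + 1) * IP (legendre m * legendre n) = IP (pderiv (legendre m) * (W * pderiv (legendre n)))"
    by (rule key)
  have b: "real m * (real m + 1) * IP (legendre m * legendre n) = IP (pderiv (legendre m) * (W * pderiv (legendre n)))"
    using key[of m n] by (simp add: ac_simps)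
  have ne: "real n * (real n + 1) \<noteq> real m * (real m + 1)"
  proof
    assume h: "real n * (real n + 1) = real m * (real m + 1)"
    show False
    proof (cases "m < n")
      case True
      then have "real m * (real m + 1) < real n * (real n + 1)" by (intro mult_strict_mono) auto
      then show False using h by simp
    next
      case False
      then have "n < m" using assms by simp
      then have "real n * (real n + 1) < real m * (real m + 1)" by (intro mult_strict_mono) auto
      then show False using h by simp
    qed
  qed
  from a b have "(real n * (real n + 1) - real m * (real m + 1)) * IP (legendre m * legendre n) = 0"
    by (simp add: algebra_simps)
  then show ?thesis using ne by simp
qed

lemma rec_poly: "smult (real n + 1) (legendre (Suc n)) = smult (2 * real n + 1) (X * legendre n) - smult (real n) (legendre (n - 1))"
proof (cases n)
  case 0
  then show ?thesis by (simp add: leg0 leg1 X_def)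
next
  case (Suc m)
  have hx: "poly (smult (real n + 1) (legendre (Suc n))) x = poly (smult (2 * real n + 1) (X * legendre n) - smult (real n) (legendre (n - 1))) x" for x
    using P_rec[of m x] unfolding Suc by (simp add: algebra_simps)
  show ?thesis
    apply (rule poly_eq_poly_eq_iff[THEN iffD1])
    apply (rule ext)
    apply (rule hx)
    done
qed

lemma IP_one: "IP 1 = 2"
  using IP_pderiv[of X] by simp

lemma norm_step: "(2 * real n + 3) * IP (legendre (Suc n) * legendre (Suc n)) = (2 * real n + 1) * IP (legendre n * legendre n)"
proof -
  define J where "J = IP (X * legendre n * legendre (Suc n))"
  have "(real n + 1) * IP (legendre (Suc n) * legendre (Suc n)) = IP (legendre (Suc n) * smult (real n + 1) (legendre (Suc n)))"
    by (simp add: IP_smult)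
  also have "\<dots> = IP (legendre (Suc n) * (smult (2 * real n + 1) (X * legendre n) - smult (real n) (legendre (n - 1))))"
    by (simp only: rec_poly)
  also have "\<dots> = (2 * real n + 1) * J - real n * IP (legendre (Suc n) * legendre (n - 1))"
    unfolding J_def by (simp add: right_diff_distrib IP_diff IP_smult ac_simps)
  also have "\<dots> = (2 * real n + 1) * J" using ortho_neq[of "Suc n" "n - 1"] by simp
  finally have e1: "(real n + 1) * IP (legendre (Suc n) * legendre (Suc n)) = (2 * real n + 1) * J" .
  have "0 = (real (Suc n) + 1) * IP (legendre (Suc (Suc n)) * legendre n)"
    using ortho_neq[of "Suc (Suc n)" n] by simp
  also have "\<dots> = IP (smult (real (Suc n) + 1) (legendre (Suc (Suc n))) * legendre n)"
    by (simp add: IP_smult)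
  also have "\<dots> = IP ((smult (2 * real (Suc n) + 1) (X * legendre (Suc n)) - smult (real (Suc n)) (legendre (Suc n - 1))) * legendre n)"
    by (simp only: rec_poly)
  also have "\<dots> = (2 * real n + 3) * J - (real n + 1) * IP (legendre n * legendre n)"
    unfolding J_def by (simp add: left_diff_distrib right_diff_distrib IP_diff IP_smult ac_simps)
  finally have e2: "(2 * real n + 3) * J = (real n + 1) * IP (legendre n * legendre n)" by simp
  have "(real n + 1) * ((2 * real n + 3) * IP (legendre (Suc n) * legendre (Suc n))) = (real n + 1) * ((2 * real n + 1) * IP (legendre n * legendre n))"
    using e1 e2 by algebra
  then show ?thesis by simp
qed

lemma norm: "IP (legendre n * legendre n) = 2 / (2 * real n + 1)"
proof (induction n)
  case 0
  then show ?case by (simp add: leg0 IP_one)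
next
  case (Suc n)
  have "(2 * real n + 3) * IP (legendre (Suc n) * legendre (Suc n)) = (2 * real n + 1) * (2 / (2 * real n + 1))"
    using norm_step[of n] Suc by simp
  also have "\<dots> = 2" by (simp add: field_simps)
  finally show ?case by (simp add: field_simps)
qed

definition oN :: "nat \<Rightarrow> nat \<Rightarrow> real" where "oN m n = (if m = n then 2 / (2 * real n + 1) else 0)"

lemma ortho: "IP (legendre m * legendre n) = oN m n"
  unfolding oN_def using norm ortho_neq by auto



lemma quad:
  fixes A B C Y V :: real
  assumes "A < 0" "B^2 < 4 * A * C" "Y \<noteq> 0 \<or> V \<noteq> 0"
  shows "A * Y^2 + B * Y * V + C * V^2 < 0"
proof -
  have id: "4 * A * (A * Y^2 + B * Y * V + C * V^2) = (2 * A * Y + B * V)^2 + (4 * A * C - B^2) * V^2"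
    by (simp add: power2_eq_square algebra_simps)
  have "0 < (2 * A * Y + B * V)^2 + (4 * A * C - B^2) * V^2"
  proof (cases "V = 0")
    case True
    then have "Y \<noteq> 0" using assms by simp
    then show ?thesis using True assms(1) by simp
  next
    case False
    then have "0 < (4 * A * C - B^2) * V^2" using assms(2) by simp
    then show ?thesis by (smt (verit) zero_le_power2)
  qed
  then have "0 < 4 * A * (A * Y^2 + B * Y * V + C * V^2)" using id by simp
  then show ?thesis
  proof (rule contrapos_pp)
    assume "\<not> A * Y^2 + B * Y * V + C * V^2 < 0"
    then have "0 \<le> A * Y^2 + B * Y * V + C * V^2" by simp
    moreover have "4 * A \<le> 0" using assms(1) by simp
    ultimately have "(4 * A) * (A * Y^2 + B * Y * V + C * V^2) \<le> 0" by (rule mult_nonpos_nonneg[rotated])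
    then show "\<not> 0 < 4 * A * (A * Y^2 + B * Y * V + C * V^2)" by simp
  qed
qed

lemma sum_odd: "(\<Sum>k<p. (2 * real k + 1)) = (real p)^2"
  by (induction p) (simp_all add: power2_eq_square algebra_simps)

lemma sum_alt_odd: "(\<Sum>k<p. (-1)^(p+k+1) * (2 * real k + 1)) = real p"
proof (induction p)
  case 0
  then show ?case by simp
next
  case (Suc p)
  have m: "(-1::real)^(Suc p + k + 1) = - ((-1)^(p+k+1))" for k by simp
  have l: "(-1::real)^(Suc p + p + 1) = 1" by (simp add: mult_2[symmetric])
  have "(\<Sum>k<Suc p. (-1)^(Suc p+k+1) * (2 * real k + 1)) = (\<Sum>k<p. (-1)^(Suc p+k+1) * (2 * real k + 1)) + (-1)^(Suc p + p + 1) * (2 * real p + 1)"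
    by (rule sum.lessThan_Suc)
  also have "\<dots> = - (\<Sum>k<p. (-1)^(p+k+1) * (2 * real k + 1)) + (2 * real p + 1)"
    unfolding m l by (simp add: sum_negf)
  also have "\<dots> = real (Suc p)" using Suc by simp
  finally show ?case .
qed
definition hh :: "nat \<Rightarrow> real" where "hh k = 2 * real k + 1"

lemma cs_term: fixes h :: real assumes "h \<noteq> 0" "e*e = 1"
  shows "(r * a - (s + t * e) * h)^2 / h = r^2*(a^2/h) - 2 * r * s * a - 2*r*t*(e*a) + s^2*h + 2 * s * t * (e*h) + t^2*h"
proof -
  have "(r * a - (s + t * e) * h)^2 = r^2*a^2 + h * (- 2 * r * s * a - 2*r*t*(e*a) + s^2*h + 2 * s * t * (e*h) + t^2*h)"
    using assms(2) by algebra
  then show ?thesis using assms(1) by (simp add: field_simps)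
qed

lemma CS:
  fixes a :: "nat \<Rightarrow> real" and r s t :: real and p :: nat
  defines "e \<equiv> \<lambda>k. (-1::real)^(p+k+1)"
  shows "0 \<le> r^2 * (\<Sum>k<p. (a k)^2 / hh k) - 2 * r * s * (\<Sum>k<p. a k) - 2 * r * t * (\<Sum>k<p. e k * a k)
          + s^2 * (real p)^2 + 2 * s * t * real p + t^2 * (real p)^2"
proof -
  have e2: "e k * e k = 1" for k unfolding e_def by (simp add: power_mult_distrib[symmetric])
  have "0 \<le> (\<Sum>k<p. (r * a k - (s + t * e k) * hh k)^2 / hh k)"
    by (intro sum_nonneg) (simp add: hh_def)
  also have "\<dots> = (\<Sum>k<p. r^2 * ((a k)^2 / hh k) - 2 * r * s * a k - 2 * r * t * (e k * a k)
       + s^2 * hh k + 2 * s * t * (e k * hh k) + t^2 * hh k)"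
  proof (rule sum.cong[OF refl])
    fix k
    have h: "hh k \<noteq> 0" by (simp add: hh_def)
    show "(r * a k - (s + t * e k) * hh k)^2 / hh k = r^2 * ((a k)^2 / hh k) - 2 * r * s * a k - 2 * r * t * (e k * a k)
       + s^2 * hh k + 2 * s * t * (e k * hh k) + t^2 * hh k"
      using cs_term[OF h e2[of k], of r "a k" s t] by simp
  qed
  also have "\<dots> = r^2 * (\<Sum>k<p. (a k)^2 / hh k) - 2 * r * s * (\<Sum>k<p. a k) - 2 * r * t * (\<Sum>k<p. e k * a k)
          + s^2 * (\<Sum>k<p. hh k) + 2 * s * t * (\<Sum>k<p. e k * hh k) + t^2 * (\<Sum>k<p. hh k)"
    by (simp only: sum.distrib sum_subtractf sum_distrib_left)
  also have "\<dots> = r^2 * (\<Sum>k<p. (a k)^2 / hh k) - 2 * r * s * (\<Sum>k<p. a k) - 2 * r * t * (\<Sum>k<p. e k * a k)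
          + s^2 * (real p)^2 + 2 * s * t * real p + t^2 * (real p)^2"
    unfolding e_def hh_def sum_odd sum_alt_odd ..
  finally show ?thesis .
qed

lemma main_ineq:
  fixes a :: "nat \<Rightarrow> real" and p :: nat
  assumes p1: "1 \<le> p" and p13: "p \<le> 13"
    and alt: "(\<Sum>k\<le>p. a k * (-1)^k) = 0"
    and nz: "\<exists>k\<le>p. a k \<noteq> 0"
  shows "(2 * (\<Sum>k\<le>p. a k) - 3 * a p)^2
     + (real p)^2 * (- 4 * (\<Sum>k\<le>p. (a k)^2 * (2 / (2 * real k + 1))) + 9 * (a p)^2 / (2 * real p + 1)) < 0"
proof -
  define P where "P = real p"
  define S where "S = (\<Sum>k<p. (a k)^2 / hh k)"
  define Y where "Y = (\<Sum>k<p. a k)"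
  define V where "V = a p"
  define e where "e = (\<lambda>k. (-1::real)^(p+k+1))"
  have h1: "(\<Sum>k\<le>p. a k) = Y + V"
    unfolding Y_def V_def lessThan_Suc_atMost[symmetric] by simp
  have h2: "(\<Sum>k\<le>p. (a k)^2 * (2 / (2 * real k + 1))) = 2 * S + 2 * V^2 / (2 * P + 1)"
    unfolding S_def V_def P_def lessThan_Suc_atMost[symmetric] hh_def
    by (simp add: sum_distrib_left mult_ac)
  have Vexp: "V = (\<Sum>k<p. e k * a k)"
  proof -
    have "(\<Sum>k<p. a k * (-1)^k) + a p * (-1)^p = 0"
      using alt unfolding lessThan_Suc_atMost[symmetric] by simp
    then have "(-1)^p * ((\<Sum>k<p. a k * (-1)^k) + a p * (-1)^p) = 0" by simp
    then have "(\<Sum>k<p. (-1)^p * (a k * (-1)^k)) + a p * ((-1)^p * (-1)^p) = 0"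
      by (simp add: sum_distrib_left algebra_simps)
    moreover have "((-1::real)^p * (-1)^p) = 1" by (simp add: power_mult_distrib[symmetric])
    moreover have "(-1)^p * (a k * (-1)^k) = - (e k * a k)" for k
      unfolding e_def by (simp add: power_add)
    ultimately have "- (\<Sum>k<p. e k * a k) + a p = 0" by (simp add: sum_negf)
    then show ?thesis unfolding V_def by simp
  qed
  have nz': "\<exists>k<p. a k \<noteq> 0"
  proof (rule ccontr)
    assume "\<not> (\<exists>k<p. a k \<noteq> 0)"
    then have z: "\<forall>k<p. a k = 0" by simp
    then have "V = 0" unfolding Vexp by simp
    then have "\<forall>k\<le>p. a k = 0" using z unfolding V_def by (metis le_neq_implies_less)
    then show False using nz by blast
  qed
  have Spos: "0 < S"
  proof -
    obtain k where k: "k < p" "a k \<noteq> 0" using nz' by blast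
    show ?thesis unfolding S_def
      by (rule sum_pos2[of _ k]) (use k in \<open>auto simp: hh_def\<close>)
  qed
  have Delta: "(2 * (\<Sum>k\<le>p. a k) - 3 * a p)^2
     + (real p)^2 * (- 4 * (\<Sum>k\<le>p. (a k)^2 * (2 / (2 * real k + 1))) + 9 * (a p)^2 / (2 * real p + 1))
     = (2 * Y - V)^2 - 8 * P^2 * S + P^2 * V^2 / (2 * P + 1)"
  proof -
    define w where "w = V^2 / (2 * P + 1)"
    have w1: "2 * V^2 / (2 * P + 1) = 2 * w" "9 * (a p)^2 / (2 * real p + 1) = 9 * w"
      "P^2 * V^2 / (2 * P + 1) = P^2 * w" by (simp_all add: w_def V_def P_def)
    show ?thesis unfolding h1 h2 w1 by (simp add: P_def V_def power2_eq_square algebra_simps)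
  qed
  show ?thesis unfolding Delta
  proof (cases "p = 1")
    case True
    have "Y = a 0" "V = a 0" "S = (a 0)^2" "P = 1"
      using Vexp by (simp_all add: True Y_def S_def e_def hh_def P_def)
    moreover have "a 0 \<noteq> 0" using nz' True by auto
    ultimately show "(2 * Y - V)^2 - 8 * P^2 * S + P^2 * V^2 / (2 * P + 1) < 0"
      by (simp add: power2_eq_square) (auto simp add: zero_less_mult_iff linorder_neq_iff)
  next
    case False
    then have p2: "2 \<le> p" using p1 by simp
    then have P2: "2 \<le> P" unfolding P_def by simp
    define q where "q = P * (P^2 - 1)"
    have qpos: "0 < q" unfolding q_def using P2 by (simp add: power2_eq_square) (smt (verit) mult_le_cancel_left1)
    define Z where "Z = P * Y^2 - 2 * Y * V + P * V^2"
    have cs: "0 \<le> q^2 * S - 2 * q * (P * Y - V) * Y - 2 * q * (P * V - Y) * V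
          + (P * Y - V)^2 * P^2 + 2 * (P * Y - V) * (P * V - Y) * P + (P * V - Y)^2 * P^2"
      using CS[of q a p "P * Y - V" "P * V - Y"] unfolding S_def Y_def Vexp[unfolded e_def] P_def
      by simp
    have "q^2 * S - 2 * q * (P * Y - V) * Y - 2 * q * (P * V - Y) * V
          + (P * Y - V)^2 * P^2 + 2 * (P * Y - V) * (P * V - Y) * P + (P * V - Y)^2 * P^2
          = q * (q * S - Z)" unfolding q_def Z_def by algebra
    with cs qpos have qSZ: "Z \<le> q * S" by (simp add: zero_le_mult_iff)
    show "(2 * Y - V)^2 - 8 * P^2 * S + P^2 * V^2 / (2 * P + 1) < 0"
    proof (cases "Y = 0 \<and> V = 0")
      case True
      then show ?thesis using Spos P2 by simp
    next
      case nzYV: False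
      define K where "K = q * (2 * P + 1)"
      have Kpos: "0 < K" unfolding K_def using qpos P2 by simp
      define A where "A = 4 * q * (2 * P + 1) - 8 * P^3 * (2 * P + 1)"
      define B where "B = - 4 * q * (2 * P + 1) + 16 * P^2 * (2 * P + 1)"
      define C where "C = q * (2 * P + 1) + q * P^2 - 8 * P^3 * (2 * P + 1)"
      have ABC: "A < 0 \<and> B^2 < 4 * A * C"
      proof -
        have pc: "p = 2 \<or> p = 3 \<or> p = 4 \<or> p = 5 \<or> p = 6 \<or> p = 7 \<or> p = 8 \<or> p = 9 \<or> p = 10 \<or> p = 11 \<or> p = 12 \<or> p = 13"
          using p2 p13 by presburger
        show ?thesis unfolding A_def B_def C_def q_def P_def
          using pc by (elim disjE) (simp_all add: power2_eq_square)
      qed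
      have F: "A * Y^2 + B * Y * V + C * V^2 < 0"
        by (rule quad) (use ABC nzYV in auto)
      have "K * ((2 * Y - V)^2 - 8 * P^2 * S + P^2 * V^2 / (2 * P + 1))
          = q * (2 * P + 1) * (2 * Y - V)^2 - 8 * P^2 * (2 * P + 1) * (q * S) + q * P^2 * V^2"
        unfolding K_def using P2 by (simp add: field_simps)
      also have "\<dots> \<le> q * (2 * P + 1) * (2 * Y - V)^2 - 8 * P^2 * (2 * P + 1) * Z + q * P^2 * V^2"
        using qSZ P2 by (simp add: mult_left_mono)
      also have "\<dots> = A * Y^2 + B * Y * V + C * V^2"
        unfolding A_def B_def C_def Z_def by algebra
      finally have "K * ((2 * Y - V)^2 - 8 * P^2 * S + P^2 * V^2 / (2 * P + 1)) < 0" using F by simp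
      then show ?thesis using Kpos by (simp add: mult_less_0_iff)
    qed
  qed
qed



lemma P_m1: "LP n (-1) = (-1)^n"
proof (induction n rule: legendre.induct)
  case 1
  then show ?case by (simp add: leg0)
next
  case 2
  then show ?case by (simp add: leg1)
next
  case (3 m)
  have "(real m + 2) * LP (Suc (Suc m)) (-1) = (real m + 2) * (-1)^(Suc (Suc m))"
    using P_rec[of m "-1"] 3 by (simp add: algebra_simps)
  then show ?case by simp
qed

lemma decomp:
  "(\<Sum>m = 1..n. smult (d m) (legendre m + legendre (m - 1))) + smult (d 0) (legendre 0)
   = (\<Sum>k\<le>n. smult (d k) (legendre k)) + (\<Sum>k<n. smult (d (Suc k)) (legendre k))"
proof (induction n)
  case 0
  then show ?case by simp
next
  case (Suc n)
  have "(\<Sum>m = 1..Suc n. smult (d m) (legendre m + legendre (m - 1))) + smult (d 0) (legendre 0)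
     = ((\<Sum>m = 1..n. smult (d m) (legendre m + legendre (m - 1))) + smult (d 0) (legendre 0))
       + smult (d (Suc n)) (legendre (Suc n) + legendre n)"
    by (simp add: sum.cl_ivl_Suc)
  also have "\<dots> = (\<Sum>k\<le>Suc n. smult (d k) (legendre k)) + (\<Sum>k<Suc n. smult (d (Suc k)) (legendre k))"
    unfolding Suc by (simp add: smult_add_right)
  finally show ?case .
qed

theorem lemma10:
  fixes p :: nat and \<eta> :: "real poly" and c :: "nat \<Rightarrow> real"
  assumes "1 \<le> p" and "p \<le> 13"
    and "degree \<eta> \<le> p" and "poly \<eta> (-1) = 0"
    and "\<eta> = (\<Sum>m = 1..p. smult (c m) (legendre m + legendre (m - 1)))"
    and "\<eta> \<noteq> 0"
  shows "(2 * poly \<eta> 1 - 3 * c p)\<^sup>2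
           + (real p)\<^sup>2 * (- 4 * integral {-1..1} (\<lambda>x. (poly \<eta> x)\<^sup>2)
                             + 9 * (c p)\<^sup>2 / (2 * real p + 1)) < 0"
proof -
  define c' where "c' k = (if 1 \<le> k \<and> k \<le> p then c k else 0)" for k
  define a where "a k = c' k + c' (Suc k)" for k
  have "\<eta> = (\<Sum>m = 1..p. smult (c' m) (legendre m + legendre (m - 1)))"
    unfolding assms(5) by (rule sum.cong) (auto simp: c'_def)
  also have "\<dots> = (\<Sum>m = 1..p. smult (c' m) (legendre m + legendre (m - 1))) + smult (c' 0) (legendre 0)"
    by (simp add: c'_def)
  also have "\<dots> = (\<Sum>k\<le>p. smult (c' k) (legendre k)) + (\<Sum>k<p. smult (c' (Suc k)) (legendre k))"
    by (rule decomp)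
  also have "(\<Sum>k<p. smult (c' (Suc k)) (legendre k)) = (\<Sum>k\<le>p. smult (c' (Suc k)) (legendre k))"
    unfolding lessThan_Suc_atMost[symmetric] by (simp add: c'_def)
  finally have eta: "\<eta> = (\<Sum>k\<le>p. smult (a k) (legendre k))"
    by (simp add: a_def sum.distrib smult_add_left)
  have polyeta: "poly \<eta> x = (\<Sum>k\<le>p. a k * LP k x)" for x
    unfolding eta poly_sum by simp
  have e1: "poly \<eta> 1 = (\<Sum>k\<le>p. a k)" unfolding polyeta by (simp add: P_one)
  have alt: "(\<Sum>k\<le>p. a k * (-1)^k) = 0" using assms(4) unfolding polyeta by (simp add: P_m1)
  have cp: "c p = a p" using assms(1) by (simp add: a_def c'_def)
  have int: "integral {-1..1} (\<lambda>x. (poly \<eta> x)\<^sup>2) = (\<Sum>k\<le>p. (a k)^2 * (2 / (2 * real k + 1)))"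
  proof -
    have "(\<lambda>x. (poly \<eta> x)\<^sup>2) = poly (\<eta> * \<eta>)" by (rule ext) (simp add: power2_eq_square)
    then have "integral {-1..1} (\<lambda>x. (poly \<eta> x)\<^sup>2) = IP (\<eta> * \<eta>)" by (simp add: IP_def)
    also have "\<eta> * \<eta> = (\<Sum>k\<le>p. \<Sum>l\<le>p. smult (a k * a l) (legendre k * legendre l))"
      unfolding eta sum_product by (simp add: mult_smult_left mult_smult_right smult_smult mult.commute)
    also have "IP \<dots> = (\<Sum>k\<le>p. \<Sum>l\<le>p. a k * a l * oN k l)"
      by (simp add: IP_sum IP_smult ortho)
    also have "\<dots> = (\<Sum>k\<le>p. (a k)^2 * (2 / (2 * real k + 1)))"
    proof (rule sum.cong[OF refl])
      fix k assume k: "k \<in> {..p}"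
      have oz: "a k * a l * oN k l = (if k = l then (a k)^2 * (2 / (2 * real k + 1)) else 0)" for l
        by (auto simp: oN_def power2_eq_square)
      show "(\<Sum>l\<le>p. a k * a l * oN k l) = (a k)^2 * (2 / (2 * real k + 1))"
        unfolding oz using k by simp
    qed
    finally show ?thesis .
  qed
  have nz: "\<exists>k\<le>p. a k \<noteq> 0"
  proof (rule ccontr)
    assume "\<not> (\<exists>k\<le>p. a k \<noteq> 0)"
    then have "\<eta> = 0" unfolding eta by simp
    then show False using assms(6) by simp
  qed
  show ?thesis unfolding e1 cp int
    by (rule main_ineq[OF assms(1) assms(2) alt nz])
qed


end
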